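(* Let $F \subseteq \mathbb{Z}_2^\omega$ be a thin set. Then Ego has no winning strategy in the game $\mathcal{G}(F)$.
   Context: $\mathbb{Z}_2^\omega$ is the set of infinite binary sequences indexed by $\omega=\{0,1,2,\dots\}$; $\mathbb{Z}_2^+=\bigcup_{n\ge1}\mathbb{Z}_2^n$ is the set of nonempty finite binary words. A set $T\subseteq\mathbb{Z}_2^\omega$ is thin if for every $n\in\omega$ the map $x\mapsto x|_{\omega\setminus\{n\}}$ is injective on $T$ (equivalently, no two distinct elements of $T$ differ in exactly one coordinate). For $F\subseteq \mathbb{Z}_2^\omega$, $\mathcal{G}(F)$ is the following infinite two-player game of perfect information: players Ego and Alter alternately choose words in $\mathbb{Z}_2^+$, Ego moving first; if the moves are $\epsilon_0,\alpha_1,\epsilon_1,\alpha_2,\epsilon_2,\dots$, the outcome is the concatenation $\epsilon_0\alpha_1\epsilon_1\alpha_2\epsilon_2\cdots\in\mathbb{Z}_2^\omega$. Ego wins if the outcome lies in $F$, otherwise Alter wins. A strategy for Ego is a function $e:\bigcup_{n\ge0}(\mathbb{Z}_2^+)^n\to\mathbb{Z}_2^+$ (giving $\epsilon_0=e(\emptyset)$, $\epsilon_i=e(\alpha_1,\dots,\alpha_i)$), and a strategy for Alter is a function $a:\bigcup_{n\ge1}(\mathbb{Z}_2^+)^n\to\mathbb{Z}_2^+$ (giving $\alpha_i=a(\epsilon_0,\dots,\epsilon_{i-1})$). A strategy of Ego is winning if every play in which Ego follows it has outcome in $F$; a strategy of Alter is winning if every play in which Alter follows it has outcome not in $F$. 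*)

theory Defs
  imports "HOL-Library.FuncSet"
begin

definition thin :: "(nat \<Rightarrow> bool) set \<Rightarrow> bool" where
  "thin T \<longleftrightarrow> (\<forall>n. inj_on (\<lambda>x. restrict x (- {n})) T)"

text \<open>A strategy for Ego maps the list of Alter's previous moves
(alpha_1, ..., alpha_i) to Ego's next move epsilon_i. It is legal if it always
produces a nonempty word when fed nonempty words.\<close>

definition ego_strategy :: "(bool list list \<Rightarrow> bool list) \<Rightarrow> bool" where
  "ego_strategy e \<longleftrightarrow> (\<forall>as. (\<forall>w\<in>set as. w \<noteq> []) \<longrightarrow> e as \<noteq> [])"

text \<open>Given Ego's strategy and the sequence of Alter's moves
(alpha (0) = alpha_1, alpha (1) = alpha_2, ...), the moves of the play in order
epsilon_0, alpha_1, epsilon_1, alpha_2, ...\<close>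

fun play_moves :: "(bool list list \<Rightarrow> bool list) \<Rightarrow> (nat \<Rightarrow> bool list) \<Rightarrow> nat \<Rightarrow> bool list" where
  "play_moves e alpha k =
     (if even k then e (map alpha [0..<k div 2]) else alpha (k div 2))"

text \<open>The outcome: the concatenation of all moves. Since all moves are nonempty,
bit n is found within the first n+1 moves.\<close>

definition outcome :: "(nat \<Rightarrow> bool list) \<Rightarrow> (nat \<Rightarrow> bool)" where
  "outcome m = (\<lambda>n. concat (map m [0..<Suc n]) ! n)"

definition ego_winning :: "(nat \<Rightarrow> bool) set \<Rightarrow> (bool list list \<Rightarrow> bool list) \<Rightarrow> bool" where
  "ego_winning F e \<longleftrightarrow> ego_strategy e \<and>
     (\<forall>alpha. (\<forall>i. alpha i \<noteq> []) \<longrightarrow> outcome (play_moves e alpha) \<in> F)"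

end

theory Submission
  imports Defs
begin

function (sequential) A1 :: "(bool list list \<Rightarrow> bool list) \<Rightarrow> nat \<Rightarrow> bool list"
 and A2 :: "(bool list list \<Rightarrow> bool list) \<Rightarrow> nat \<Rightarrow> bool list" where
  "A1 e 0 = [False]"
| "A1 e (Suc k) = e (map (A2 e) [0..<Suc k])"
| "A2 e 0 = True # e [[False]]"
| "A2 e (Suc k) = e (map (A1 e) [0..<Suc (Suc k)])"
  by pat_completeness auto
termination
  by (relation "measure (case_sum (\<lambda>(e,n). 2*n) (\<lambda>(e,n). Suc (2*n)))") auto

lemma A_nonempty:
  assumes "ego_strategy e"
  shows "A1 e n \<noteq> [] \<and> A2 e n \<noteq> []"
proof (induction n rule: less_induct)
  case (less n)
  have a1: "A1 e n \<noteq> []"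
  proof (cases n)
    case 0 then show ?thesis by simp
  next
    case (Suc k)
    have "\<forall>w\<in>set (map (A2 e) [0..<Suc k]). w \<noteq> []" using less Suc by auto
    then show ?thesis using assms Suc unfolding ego_strategy_def by simp
  qed
  have a2: "A2 e n \<noteq> []"
  proof (cases n)
    case 0 then show ?thesis by simp
  next
    case (Suc k)
    have "\<forall>w\<in>set (map (A1 e) [0..<Suc (Suc k)]). w \<noteq> []"
    proof
      fix w assume "w \<in> set (map (A1 e) [0..<Suc (Suc k)])"
      then obtain i where i: "i < Suc (Suc k)" "w = A1 e i"
        by (auto simp del: upt_Suc A1.simps)
      show "w \<noteq> []"
      proof (cases "i = n")
        case True then show ?thesis using a1 i by simp
      next
        case False then show ?thesis using less i Suc by auto
      qed
    qed
    then show ?thesis using assms Suc unfolding ego_strategy_def by simp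
  qed
  show ?case using a1 a2 by simp
qed

lemma moves_nonempty:
  assumes "ego_strategy e" "\<forall>i. alpha i \<noteq> []"
  shows "play_moves e alpha k \<noteq> []"
  using assms unfolding ego_strategy_def by auto

lemma concat_len:
  assumes "\<forall>k. m k \<noteq> []"
  shows "K \<le> length (concat (map m [0..<K]))"
proof (induction K)
  case 0 then show ?case by simp
next
  case (Suc K)
  have "m K \<noteq> []" using assms by simp
  then show ?case using Suc by (simp add: length_greater_0_conv[symmetric] del: length_greater_0_conv)
qed

lemma concat_prefix:
  assumes "K \<le> K'"
  shows "\<exists>r. concat (map m [0..<K']) = concat (map m [0..<K]) @ r"
proof -
  have "[0..<K'] = [0..<K] @ [K..<K']" using assms
    by (metis le_add_diff_inverse upt_add_eq_append zero_le)
  then show ?thesis by simp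
qed

lemma outcome_nth:
  assumes "\<forall>k. m k \<noteq> []" "n < length (concat (map m [0..<N]))"
  shows "outcome m n = concat (map m [0..<N]) ! n"
proof -
  let ?M = "max N (Suc n)"
  obtain r1 where r1: "concat (map m [0..<?M]) = concat (map m [0..<N]) @ r1"
    using concat_prefix[of N ?M m] by auto
  obtain r2 where r2: "concat (map m [0..<?M]) = concat (map m [0..<Suc n]) @ r2"
    using concat_prefix[of "Suc n" ?M m] by auto
  have l: "n < length (concat (map m [0..<Suc n]))"
    using concat_len[OF assms(1), of "Suc n"] by simp
  have "outcome m n = concat (map m [0..<?M]) ! n"
    unfolding outcome_def using r2 l by (simp add: nth_append del: upt_Suc)
  also have "\<dots> = concat (map m [0..<N]) ! n"
    using r1 assms(2) by (simp add: nth_append del: upt_Suc)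
  finally show ?thesis .
qed

lemma shift_eq:
  assumes "2 \<le> K"
  shows "play_moves e (A1 e) (Suc K) = play_moves e (A2 e) K"
proof (cases "even K")
  case True
  then obtain j where j: "K = 2 * j" by blast
  with assms obtain k where k: "j = Suc k" by (cases j) auto
  have "play_moves e (A1 e) (Suc K) = A1 e j" using j by simp
  moreover have "play_moves e (A2 e) K = e (map (A2 e) [0..<j])" using j by simp
  ultimately show ?thesis using k by simp
next
  case False
  then obtain j where j: "K = 2 * j + 1" using oddE by blast
  with assms obtain k where k: "j = Suc k" by (cases j) auto
  have "play_moves e (A1 e) (Suc K) = e (map (A1 e) [0..<Suc j])" using j by simp
  moreover have "play_moves e (A2 e) K = A2 e j" using j by simp
  ultimately show ?thesis using k by simp
qed

lemma common:
  assumes "2 \<le> K"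
  shows "\<exists>Y. concat (map (play_moves e (A1 e)) [0..<Suc K]) = e [] @ False # Y
           \<and> concat (map (play_moves e (A2 e)) [0..<K]) = e [] @ True # Y"
  using assms
proof (induction K rule: dec_induct)
  case base
  have "[0..<Suc 2] = [0,1,2]" by (simp add: upt_rec)
  moreover have "[0..<2] = [0::nat,1]" by (simp add: upt_rec)
  ultimately show ?case by (simp add: upt_rec)
next
  case (step K)
  then obtain Y where Y: "concat (map (play_moves e (A1 e)) [0..<Suc K]) = e [] @ False # Y"
           "concat (map (play_moves e (A2 e)) [0..<K]) = e [] @ True # Y" by blast
  have "play_moves e (A1 e) (Suc K) = play_moves e (A2 e) K"
    using shift_eq step by simp
  then show ?case using Y
    by (intro exI[of _ "Y @ play_moves e (A2 e) K"]) (simp del: play_moves.simps)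
qed

theorem proposition6:
  fixes F :: "(nat \<Rightarrow> bool) set"
  assumes "thin F"
  shows "\<not> (\<exists>e. ego_winning F e)"
proof
  assume "\<exists>e. ego_winning F e"
  then obtain e where e: "ego_strategy e"
    "\<And>alpha. (\<forall>i. alpha i \<noteq> []) \<Longrightarrow> outcome (play_moves e alpha) \<in> F"
    unfolding ego_winning_def by blast
  have n1: "\<forall>i. A1 e i \<noteq> []" and n2: "\<forall>i. A2 e i \<noteq> []" using A_nonempty[OF e(1)] by auto
  define o1 where "o1 = outcome (play_moves e (A1 e))"
  define o2 where "o2 = outcome (play_moves e (A2 e))"
  have in1: "o1 \<in> F" using e(2) n1 o1_def by blast
  have in2: "o2 \<in> F" using e(2) n2 o2_def by blast
  have m1: "\<forall>k. play_moves e (A1 e) k \<noteq> []" using moves_nonempty[OF e(1) n1] by blast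
  have m2: "\<forall>k. play_moves e (A2 e) k \<noteq> []" using moves_nonempty[OF e(1) n2] by blast
  let ?p = "length (e [])"
  have key: "\<exists>Y. o1 n = (e [] @ False # Y) ! n \<and> o2 n = (e [] @ True # Y) ! n" for n
  proof -
    let ?K = "n + 2"
    obtain Y where Y: "concat (map (play_moves e (A1 e)) [0..<Suc ?K]) = e [] @ False # Y"
           "concat (map (play_moves e (A2 e)) [0..<?K]) = e [] @ True # Y"
      using common[of ?K e] by auto
    have l1: "n < length (concat (map (play_moves e (A1 e)) [0..<Suc ?K]))"
      using concat_len[OF m1, of "Suc ?K"] by linarith
    have l2: "n < length (concat (map (play_moves e (A2 e)) [0..<?K]))"
      using concat_len[OF m2, of "?K"] by linarith
    show ?thesis using outcome_nth[OF m1 l1] outcome_nth[OF m2 l2] Y o1_def o2_def by auto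
  qed
  have neq: "o1 \<noteq> o2"
  proof -
    obtain Y where "o1 ?p = (e [] @ False # Y) ! ?p" "o2 ?p = (e [] @ True # Y) ! ?p"
      using key by blast
    then have "o1 ?p = False" "o2 ?p = True" by (simp_all add: nth_append)
    then show ?thesis by auto
  qed
  have req: "restrict o1 (- {?p}) = restrict o2 (- {?p})"
  proof
    fix n
    show "restrict o1 (- {?p}) n = restrict o2 (- {?p}) n"
    proof (cases "n = ?p")
      case True then show ?thesis by simp
    next
      case False
      obtain Y where "o1 n = (e [] @ False # Y) ! n" "o2 n = (e [] @ True # Y) ! n"
        using key by blast
      moreover have "(e [] @ False # Y) ! n = (e [] @ True # Y) ! n"
        using False by (cases "n < ?p") (simp_all add: nth_append nth_Cons')
      ultimately show ?thesis using False by simp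
    qed
  qed
  have "inj_on (\<lambda>x. restrict x (- {?p})) F" using assms unfolding thin_def by blast
  then show False using in1 in2 req neq unfolding inj_on_def by blast
qed

end
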